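(* In the concrete model with $M=2k$ and all $b_j\neq0$, suppose the angles $\theta_1,\dots,\theta_{2k}\in\mathbb{C}$ satisfy, with $\theta_0=\theta_{-1}=0$, $$\sin\theta_{2j}=\frac{b_{2j}}{\cos\theta_{2j-2}},\qquad \sin\theta_{2j-1}=\frac{b_{2j-1}}{\cos\theta_{2j-2}\cos\theta_{2j-3}\cos\theta_{2j}}\qquad(1\le j\le k),$$ with all $\cos\theta_j\neq0$, and suppose the couplings are chosen as $\beta_3=\frac{1}{1-b_2^2}$, $\beta_5=\frac{1}{1-b_2^2-b_4^2}$ with the remaining $\beta_{2m+1}$ ($m\ge3$) given by the recursion of the concrete model. Then $\beta_{2j-1}=\frac{1}{\cos^2\theta_{2j-4}\cos^2\theta_{2j-2}}$ for $2\le j\le k$, and the transfer matrix at $u=-1$ factorizes as $T_{2k}(-1)=\mathcal{V}_{2k}$.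
   Context: Concrete model. Fix an integer $M\ge1$ and complex numbers $b_1,\dots,b_M$. Let $h_1,\dots,h_M$ be elements of a unital associative complex algebra satisfying $h_m^2=b_m^2\mathbb{1}$, $h_mh_{m+1}=-h_{m+1}h_m$, $h_mh_{m+2}=-h_{m+2}h_m$, and $h_mh_l=h_lh_m$ for $|l-m|>2$ (e.g. $h_m=b_m\sigma^z_m\sigma^z_{m+1}\sigma^x_{m+2}$ on a spin chain). Set $h_j:=0$, $b_j:=0$ for $j\le 0$ or $j>M$. Let $\beta_3,\beta_5$ be arbitrary complex numbers and define $\beta_{2m+1}:=\beta_{2m-1}/(b_{2m-4}^2\beta_{2m-3}-b_{2m}^2\beta_{2m-1}+1)$ for $m\ge3$ (denominators assumed nonzero). For $2\le m\le\lfloor M/2\rfloor$ put $\bar h_{2m+1}:=\beta_{2m-1}h_{2m-2}h_{2m-3}h_{2m}$ and $\bar b_{2m+1}:=\beta_{2m-1}b_{2m-2}b_{2m-3}b_{2m}$ (so $\bar h_{2m+1}^2=\bar b_{2m+1}^2\mathbb{1}$); otherwise $\bar h_{2m+1}:=0$, $\bar b_{2m+1}:=0$. For $1\le j\le M$, the model of size $j$ (same couplings) has frustration graph $G_j$ with vertices $h_1,\dots,h_j$ and $\bar h_{2m+1}$ for $2\le m\le\lfloor j/2\rfloor$, and edges $h_i\sim h_l$ iff $|i-l|\in\{1,2\}$; $\bar h_{2m-1}\sim h_l$ iff $l\in\{2m-7,2m-5,2m-3,2m-1,2m-2,2m\}$; $\bar h_{2m-1}\sim\bar h_{2m'-1}$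 iff $|m-m'|=1$ (adjacent vertices anticommute, non-adjacent distinct ones commute). Charges: $Q_j^{(k)}:=\sum_{S}\prod_{v\in S}v$, the sum over independent sets $S$ of $G_j$ of size $k$ ($Q_j^{(0)}=\mathbb{1}$). Hamiltonian $H_j:=Q_j^{(1)}=\sum_{l=1}^j h_l+\sum_{m=2}^{\lfloor j/2\rfloor}\beta_{2m-1}h_{2m-2}h_{2m-3}h_{2m}$. Transfer matrix $T_j(u):=\sum_{k\ge0}(-u)^kQ_j^{(k)}$ for $u\in\mathbb{C}$, with $T_j(u):=\mathbb{1}$ for $j\le 0$. Circuit: local gates $g_j:=\cos(\theta_j/2)\mathbb{1}+\sin(\theta_j/2)\,b_j^{-1}h_j$; $G_{2k}:=(g_2g_1)(g_4g_3)\cdots(g_{2k}g_{2k-1})$, $G_{2k}^{\top}:=(g_{2k-1}g_{2k})\cdots(g_3g_4)(g_1g_2)$ (reversed order); $\mathcal{V}_{2k}:=G_{2k}G_{2k}^{\top}$. *)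

theory Defs
  imports Complex_Main "HOL-Library.Product_Lexorder"
begin

text \<open>A unital associative complex algebra is modelled as a ring type 'a together
with a ring homomorphism c from the complex numbers into the centre of 'a
(scalar multiplication z * x is c z * x).\<close>
definition alg_emb :: "(complex \<Rightarrow> 'a::ring_1) \<Rightarrow> bool" where
  "alg_emb c \<longleftrightarrow> c 0 = 0 \<and> c 1 = 1 \<and> (\<forall>x y. c (x + y) = c x + c y)
     \<and> (\<forall>x y. c (x * y) = c x * c y) \<and> (\<forall>z a. c z * a = a * c z)"

text \<open>betaf b x y m = beta_(2m+1), with beta_3 = x, beta_5 = y and the recursion
 beta_(2m+1) = beta_(2m-1) / (b_(2m-4)^2 beta_(2m-3) - b_(2m)^2 beta_(2m-1) + 1), m >= 3.
 (The value at m = 0 is never used.)\<close>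
fun betaf :: "(int \<Rightarrow> complex) \<Rightarrow> complex \<Rightarrow> complex \<Rightarrow> nat \<Rightarrow> complex" where
  "betaf b x y 0 = 0"
| "betaf b x y (Suc 0) = x"
| "betaf b x y (Suc (Suc 0)) = y"
| "betaf b x y (Suc (Suc (Suc n))) =
     betaf b x y (Suc (Suc n)) /
       ((b (2 * int (n + 3) - 4))\<^sup>2 * betaf b x y (Suc n)
        - (b (2 * int (n + 3)))\<^sup>2 * betaf b x y (Suc (Suc n)) + 1)"

text \<open>Vertices of the frustration graph: (0, l) stands for h_l, (1, m) stands for
 the barred generator hbar_(2m+1).\<close>
type_synonym vtx = "nat \<times> int"

definition vset :: "int \<Rightarrow> vtx set" where
  "vset j = {(0, l) | l. 1 \<le> l \<and> l \<le> j} \<union> {(1, m) | m. 2 \<le> m \<and> m \<le> j div 2}"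

text \<open>hbar_(2m+1) ~ h_l iff l in {2m-5, 2m-3, 2m-1, 2m+1, 2m, 2m+2}
 (this is the rule for hbar_(2m'-1) with m' = m + 1).\<close>
definition bar_adj :: "int \<Rightarrow> int \<Rightarrow> bool" where
  "bar_adj m l \<longleftrightarrow> l \<in> {2*m - 5, 2*m - 3, 2*m - 1, 2*m + 1, 2*m, 2*m + 2}"

fun adj :: "vtx \<Rightarrow> vtx \<Rightarrow> bool" where
  "adj (a, x) (a', y) =
     ((a = 0 \<and> a' = 0 \<and> \<bar>x - y\<bar> \<in> {1, 2})
    \<or> (a = 1 \<and> a' = 0 \<and> bar_adj x y)
    \<or> (a = 0 \<and> a' = 1 \<and> bar_adj y x)
    \<or> (a = 1 \<and> a' = 1 \<and> \<bar>x - y\<bar> = 1))"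

definition indep :: "vtx set \<Rightarrow> vtx set \<Rightarrow> bool" where
  "indep V S \<longleftrightarrow> S \<subseteq> V \<and> (\<forall>u\<in>S. \<forall>v\<in>S. \<not> adj u v)"

text \<open>Operator attached to a vertex: h_l, resp.
 hbar_(2m+1) = beta_(2m-1) h_(2m-2) h_(2m-3) h_(2m).\<close>
fun vval :: "(complex \<Rightarrow> 'a::ring_1) \<Rightarrow> (int \<Rightarrow> complex) \<Rightarrow> complex \<Rightarrow> complex
              \<Rightarrow> (int \<Rightarrow> 'a) \<Rightarrow> vtx \<Rightarrow> 'a" where
  "vval c b x y h (a, l) =
     (if a = 0 then h l
      else c (betaf b x y (nat l - 1)) * h (2*l - 2) * h (2*l - 3) * h (2*l))"

text \<open>Q_j^(k): sum over independent sets of size k of the product of their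
 (pairwise commuting) vertices; the product is taken in the increasing order
 of vertices, which does not matter since they commute.\<close>
definition charge :: "(complex \<Rightarrow> 'a::ring_1) \<Rightarrow> (int \<Rightarrow> complex) \<Rightarrow> complex \<Rightarrow> complex
              \<Rightarrow> (int \<Rightarrow> 'a) \<Rightarrow> int \<Rightarrow> nat \<Rightarrow> 'a" where
  "charge c b x y h j k =
     (\<Sum>S \<in> {S. indep (vset j) S \<and> card S = k}.
        prod_list (map (vval c b x y h) (sorted_list_of_set S)))"

definition transfer :: "(complex \<Rightarrow> 'a::ring_1) \<Rightarrow> (int \<Rightarrow> complex) \<Rightarrow> complex \<Rightarrow> complex
              \<Rightarrow> (int \<Rightarrow> 'a) \<Rightarrow> int \<Rightarrow> complex \<Rightarrow> 'a" where
  "transfer c b x y h j u =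
     (if j \<le> 0 then 1
      else (\<Sum>k \<in> {0..card (vset j)}. c ((- u) ^ k) * charge c b x y h j k))"

definition gate :: "(complex \<Rightarrow> 'a::ring_1) \<Rightarrow> (int \<Rightarrow> complex) \<Rightarrow> (int \<Rightarrow> complex)
              \<Rightarrow> (int \<Rightarrow> 'a) \<Rightarrow> int \<Rightarrow> 'a" where
  "gate c b \<theta> h j = c (cos (\<theta> j / 2)) + c (sin (\<theta> j / 2) / b j) * h j"

text \<open>G_2k = (g2 g1)(g4 g3)...(g_2k g_2k-1),  G_2k^T = (g_2k-1 g_2k)...(g1 g2),
 V_2k = G_2k G_2k^T.\<close>
definition circV :: "(complex \<Rightarrow> 'a::ring_1) \<Rightarrow> (int \<Rightarrow> complex) \<Rightarrow> (int \<Rightarrow> complex)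
              \<Rightarrow> (int \<Rightarrow> 'a) \<Rightarrow> nat \<Rightarrow> 'a" where
  "circV c b \<theta> h k =
     prod_list (map (\<lambda>i. gate c b \<theta> h (2*i) * gate c b \<theta> h (2*i - 1)) [1..int k])
   * prod_list (map (\<lambda>i. gate c b \<theta> h (2*i - 1) * gate c b \<theta> h (2*i)) (rev [1..int k]))"

end

theory Submission
  imports Defs "HOL-Library.Multiset"
begin


definition gbar :: "(complex \<Rightarrow> 'a::ring_1) \<Rightarrow> (int \<Rightarrow> complex) \<Rightarrow> (int \<Rightarrow> complex)
              \<Rightarrow> (int \<Rightarrow> 'a) \<Rightarrow> int \<Rightarrow> 'a" where
  "gbar c b \<theta> h j = c (cos (\<theta> j / 2)) - c (sin (\<theta> j / 2) / b j) * h j"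

fun Gp :: "(complex \<Rightarrow> 'a::ring_1) \<Rightarrow> (int \<Rightarrow> complex) \<Rightarrow> (int \<Rightarrow> complex)
              \<Rightarrow> (int \<Rightarrow> 'a) \<Rightarrow> nat \<Rightarrow> 'a" where
  "Gp c b \<theta> h 0 = 1"
| "Gp c b \<theta> h (Suc n) = Gp c b \<theta> h n * (gate c b \<theta> h (2 * int n + 2) * gate c b \<theta> h (2 * int n + 1))"

fun Gt :: "(complex \<Rightarrow> 'a::ring_1) \<Rightarrow> (int \<Rightarrow> complex) \<Rightarrow> (int \<Rightarrow> complex)
              \<Rightarrow> (int \<Rightarrow> 'a) \<Rightarrow> nat \<Rightarrow> 'a" where
  "Gt c b \<theta> h 0 = 1"
| "Gt c b \<theta> h (Suc n) = (gate c b \<theta> h (2 * int n + 1) * gate c b \<theta> h (2 * int n + 2)) * Gt c b \<theta> h n"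

lemma upto_Suc_int: "[1..int (Suc n)] = [1..int n] @ [int n + 1]"
  using upto_rec2[of 1 "int n + 1"] by (simp add: add.commute)

lemma Gp_list: "Gp c b \<theta> h n = prod_list (map (\<lambda>i. gate c b \<theta> h (2*i) * gate c b \<theta> h (2*i - 1)) [1..int n])"
proof (induction n)
  case (Suc n)
  show ?case unfolding upto_Suc_int by (simp only: Gp.simps Suc.IH) (simp add: distrib_left add.commute)
qed simp

lemma Gt_list: "Gt c b \<theta> h n = prod_list (map (\<lambda>i. gate c b \<theta> h (2*i - 1) * gate c b \<theta> h (2*i)) (rev [1..int n]))"
proof (induction n)
  case (Suc n)
  show ?case unfolding upto_Suc_int by (simp only: Gt.simps Suc.IH) (simp add: distrib_left add.commute)
qed simp

lemma circV_Gp: "circV c b \<theta> h k = Gp c b \<theta> h k * Gt c b \<theta> h k"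
  by (simp add: circV_def Gp_list Gt_list)




locale model =
  fixes c :: "complex \<Rightarrow> 'a::ring_1"
    and h :: "int \<Rightarrow> 'a"
    and b \<theta> :: "int \<Rightarrow> complex"
    and K :: nat
    and \<beta>3 \<beta>5 :: complex
  assumes alg: "alg_emb c"
    and k1: "1 \<le> K"
    and h_out: "\<And>j. j < 1 \<or> j > 2 * int K \<Longrightarrow> h j = 0"
    and b_out: "\<And>j. j < 1 \<or> j > 2 * int K \<Longrightarrow> b j = 0"
    and h_sq: "\<And>m. 1 \<le> m \<Longrightarrow> m \<le> 2 * int K \<Longrightarrow> h m * h m = c ((b m)\<^sup>2)"
    and h_ac1: "\<And>m. 1 \<le> m \<Longrightarrow> m + 1 \<le> 2 * int K \<Longrightarrow> h m * h (m + 1) = - (h (m + 1) * h m)"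
    and h_ac2: "\<And>m. 1 \<le> m \<Longrightarrow> m + 2 \<le> 2 * int K \<Longrightarrow> h m * h (m + 2) = - (h (m + 2) * h m)"
    and h_comm: "\<And>m l. 1 \<le> m \<Longrightarrow> m \<le> 2 * int K \<Longrightarrow> 1 \<le> l \<Longrightarrow> l \<le> 2 * int K \<Longrightarrow>
                   \<bar>l - m\<bar> > 2 \<Longrightarrow> h m * h l = h l * h m"
    and b_nz: "\<And>j. 1 \<le> j \<Longrightarrow> j \<le> 2 * int K \<Longrightarrow> b j \<noteq> 0"
    and th0: "\<theta> 0 = 0" and thm1: "\<theta> (-1) = 0"
    and cos_nz: "\<And>j. 1 \<le> j \<Longrightarrow> j \<le> 2 * int K \<Longrightarrow> cos (\<theta> j) \<noteq> 0"
    and sin_even: "\<And>j. 1 \<le> j \<Longrightarrow> j \<le> int K \<Longrightarrow>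
                     sin (\<theta> (2*j)) = b (2*j) / cos (\<theta> (2*j - 2))"
    and sin_odd: "\<And>j. 1 \<le> j \<Longrightarrow> j \<le> int K \<Longrightarrow>
                     sin (\<theta> (2*j - 1)) = b (2*j - 1) /
                       (cos (\<theta> (2*j - 2)) * cos (\<theta> (2*j - 3)) * cos (\<theta> (2*j)))"
    and beta3: "\<beta>3 = 1 / (1 - (b 2)\<^sup>2)"
    and beta5: "\<beta>5 = 1 / (1 - (b 2)\<^sup>2 - (b 4)\<^sup>2)"
begin

lemma c0[simp]: "c 0 = 0" and c1[simp]: "c 1 = 1"
  and c_add: "c (x + y) = c x + c y" and c_mult: "c (x * y) = c x * c y"
  and c_comm: "c z * a = a * c z"
  using alg unfolding alg_emb_def by blast+

lemma c_minus: "c (- z) = - c z"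
  by (metis add.right_inverse add_eq_0_iff c0 c_add)

lemma c_diff: "c (x - y) = c x - c y"
  by (metis c_add c_minus diff_conv_add_uminus)

lemma c_left: "a * (c z * d) = c z * (a * d)"
  by (metis c_comm mult.assoc)

lemma c_cc: "c z * (c w * d) = c (z * w) * d"
  by (simp add: c_mult mult.assoc)

lemma c_cc2: "c z * c w = c (z * w)"
  by (simp add: c_mult)


lemma c_double: "c x * a + c x * a = c (2 * x) * a"
  by (metis c_add distrib_right mult_2)

lemma h_c: "h i * c z = c z * h i"
  by (simp add: c_comm)

lemma h_left: "h i * (c z * d) = c z * (h i * d)"
  by (simp add: c_left)

lemmas cnorm = h_c h_left c_cc c_cc2 mult.assoc distrib_left distrib_right left_diff_distrib right_diff_distrib
  c_add c_diff c_minus mult.commute mult.left_commute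

definition sg :: "int \<Rightarrow> int \<Rightarrow> int" where
  "sg i j = (if \<bar>i - j\<bar> \<in> {1, 2} then -1 else 1)"

lemma h_out_iff: "\<not> (1 \<le> j \<and> j \<le> 2 * int K) \<Longrightarrow> h j = 0"
  using h_out by force

lemma h_anti: assumes "\<bar>i - j\<bar> \<in> {1, 2}" shows "h i * h j = - (h j * h i)"
proof (cases "1 \<le> i \<and> i \<le> 2 * int K \<and> 1 \<le> j \<and> j \<le> 2 * int K")
  case True
  then consider "j = i + 1" | "j = i + 2" | "i = j + 1" | "i = j + 2" using assms by (auto simp: abs_if split: if_splits)
  then show ?thesis
  proof cases
    case 1 then show ?thesis using h_ac1[of i] True by auto
  next
    case 2 then show ?thesis using h_ac2[of i] True by auto
  next
    case 3 then show ?thesis using h_ac1[of j] True by (metis add.inverse_inverse)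
  next
    case 4 then show ?thesis using h_ac2[of j] True by (metis add.inverse_inverse)
  qed
next
  case False
  then have "h i = 0 \<or> h j = 0" using h_out_iff by blast
  then show ?thesis by auto
qed

lemma h_com: assumes "\<bar>i - j\<bar> \<notin> {1, 2}" shows "h i * h j = h j * h i"
proof (cases "1 \<le> i \<and> i \<le> 2 * int K \<and> 1 \<le> j \<and> j \<le> 2 * int K")
  case True
  show ?thesis
  proof (cases "i = j")
    case False
    then have "\<bar>j - i\<bar> > 2" using assms by auto
    then show ?thesis using h_comm[of i j] True by auto
  qed simp
next
  case False
  then have "h i = 0 \<or> h j = 0" using h_out_iff by blast
  then show ?thesis by auto
qed

lemma h_swap: "h i * h j = of_int (sg i j) * (h j * h i)"
  using h_anti[of i j] h_com[of i j] by (auto simp: sg_def)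

lemma h_sq_all: "h m * h m = c ((b m)\<^sup>2)"
proof (cases "1 \<le> m \<and> m \<le> 2 * int K")
  case True then show ?thesis using h_sq by auto
next
  case False then show ?thesis using h_out_iff b_out by force
qed


abbreviation g where "g \<equiv> gate c b \<theta> h"
abbreviation gb where "gb \<equiv> gbar c b \<theta> h"

lemma cos_half: "cos (\<theta> j) = (cos (\<theta> j / 2))\<^sup>2 - (sin (\<theta> j / 2))\<^sup>2"
  using cos_double[of "\<theta> j / 2"] by simp

lemma sin_half: "sin (\<theta> j) = 2 * sin (\<theta> j / 2) * cos (\<theta> j / 2)"
  using sin_double[of "\<theta> j / 2"] by simp

lemma gb_g: assumes "1 \<le> j" "j \<le> 2 * int K" shows "gb j * g j = c (cos (\<theta> j))"
proof -
  have bj: "b j \<noteq> 0" using b_nz assms by auto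
  have "gb j * g j = c ((cos (\<theta> j / 2))\<^sup>2) - c ((sin (\<theta> j / 2) / b j)\<^sup>2) * (h j * h j)"
    unfolding gate_def gbar_def by (simp add: cnorm power2_eq_square)
  also have "\<dots> = c ((cos (\<theta> j / 2))\<^sup>2 - (sin (\<theta> j / 2))\<^sup>2)"
    using bj by (simp add: h_sq_all cnorm power_divide)
  finally show ?thesis by (simp add: cos_half)
qed

lemma g_gb: assumes "1 \<le> j" "j \<le> 2 * int K" shows "g j * gb j = c (cos (\<theta> j))"
proof -
  have bj: "b j \<noteq> 0" using b_nz assms by auto
  have "g j * gb j = c ((cos (\<theta> j / 2))\<^sup>2) - c ((sin (\<theta> j / 2) / b j)\<^sup>2) * (h j * h j)"
    unfolding gate_def gbar_def by (simp add: cnorm power2_eq_square)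
  also have "\<dots> = c ((cos (\<theta> j / 2))\<^sup>2 - (sin (\<theta> j / 2))\<^sup>2)"
    using bj by (simp add: h_sq_all cnorm power_divide)
  finally show ?thesis by (simp add: cos_half)
qed

lemma g_sq: assumes "1 \<le> j" "j \<le> 2 * int K" shows "g j * g j = 1 + c (sin (\<theta> j) / b j) * h j"
proof -
  have bj: "b j \<noteq> 0" using b_nz assms by auto
  have sc: "c ((cos (\<theta> j / 2))\<^sup>2) + c ((sin (\<theta> j / 2))\<^sup>2) = 1"
    using sin_cos_squared_add[of "\<theta> j / 2"] by (metis add.commute c1 c_add)
  have "g j * g j = c ((cos (\<theta> j / 2))\<^sup>2) + c ((sin (\<theta> j / 2) / b j)\<^sup>2) * (h j * h j)
        + (c (sin (\<theta> j / 2) * cos (\<theta> j / 2) / b j) * h j + c (sin (\<theta> j / 2) * cos (\<theta> j / 2) / b j) * h j)"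
    unfolding gate_def by (simp add: cnorm power2_eq_square)
  also have "\<dots> = c ((cos (\<theta> j / 2))\<^sup>2) + c ((sin (\<theta> j / 2) / b j)\<^sup>2) * (h j * h j)
        + c (2 * (sin (\<theta> j / 2) * cos (\<theta> j / 2) / b j)) * h j"
    by (simp only: c_double)
  also have "\<dots> = 1 + c (sin (\<theta> j) / b j) * h j"
    using bj sc by (simp add: h_sq_all cnorm power_divide sin_half)
  finally show ?thesis .
qed

lemma g_h_anti: assumes "\<bar>i - j\<bar> \<in> {1, 2}" shows "g j * h i = h i * gb j"
proof -
  have "h j * h i = - (h i * h j)" using h_anti[of j i] assms by (auto simp: abs_minus_commute)
  then show ?thesis unfolding gate_def gbar_def by (simp add: cnorm)
qed

lemma gb_h_anti: assumes "\<bar>i - j\<bar> \<in> {1, 2}" shows "gb j * h i = h i * g j"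
proof -
  have "h j * h i = - (h i * h j)" using h_anti[of j i] assms by (auto simp: abs_minus_commute)
  then show ?thesis unfolding gate_def gbar_def by (simp add: cnorm)
qed

lemma g_h_com: assumes "\<bar>i - j\<bar> \<notin> {1, 2}" shows "g j * h i = h i * g j"
proof -
  have "h j * h i = h i * h j" using h_com[of j i] assms by (auto simp: abs_minus_commute)
  then show ?thesis unfolding gate_def by (simp add: cnorm)
qed


abbreviation Gpn where "Gpn \<equiv> Gp c b \<theta> h"
abbreviation Gtn where "Gtn \<equiv> Gt c b \<theta> h"

lemma Gp_h_com: "2 * int n + 3 \<le> i \<Longrightarrow> Gpn n * h i = h i * Gpn n"
proof (induction n)
  case (Suc n)
  have a: "g (2 * int n + 1) * h i = h i * g (2 * int n + 1)"
    by (rule g_h_com) (use Suc.prems in auto)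
  have b: "g (2 * int n + 2) * h i = h i * g (2 * int n + 2)"
    by (rule g_h_com) (use Suc.prems in auto)
  have "Gpn (Suc n) * h i = Gpn n * (g (2 * int n + 2) * (g (2 * int n + 1) * h i))"
    by (simp add: mult.assoc)
  also have "\<dots> = (Gpn n * h i) * (g (2 * int n + 2) * g (2 * int n + 1))"
    by (metis a b mult.assoc)
  also have "\<dots> = h i * Gpn (Suc n)"
    using Suc by (simp add: mult.assoc)
  finally show ?case .
qed simp

lemma Gt_h_com: "2 * int n + 3 \<le> i \<Longrightarrow> h i * Gtn n = Gtn n * h i"
proof (induction n)
  case (Suc n)
  have a: "g (2 * int n + 1) * h i = h i * g (2 * int n + 1)"
    by (rule g_h_com) (use Suc.prems in auto)
  have b: "g (2 * int n + 2) * h i = h i * g (2 * int n + 2)"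
    by (rule g_h_com) (use Suc.prems in auto)
  have "h i * Gtn (Suc n) = (h i * g (2 * int n + 1)) * g (2 * int n + 2) * Gtn n"
    by (simp add: mult.assoc)
  also have "\<dots> = g (2 * int n + 1) * g (2 * int n + 2) * (h i * Gtn n)"
    by (simp add: a[symmetric] b[symmetric] mult.assoc)
  also have "\<dots> = Gtn (Suc n) * h i"
    using Suc by (simp add: mult.assoc)
  finally show ?case .
qed simp

lemma Gp_left: "Gpn n * (c z * d) = c z * (Gpn n * d)" by (simp add: c_left)
lemma Gt_left: "Gtn n * (c z * d) = c z * (Gtn n * d)" by (simp add: c_left)
lemma Gp_c: "Gpn n * c z = c z * Gpn n" by (simp add: c_comm)
lemma Gt_c: "Gtn n * c z = c z * Gtn n" by (simp add: c_comm)

definition VV where "VV n = Gpn n * Gtn n"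
definition EE where "EE n = Gpn n * (h (2 * int n + 2) * Gtn n)"
definition FF where "FF n = Gpn n * (h (2 * int n + 1) * Gtn n)"
definition HH where "HH n = Gpn n * (h (2 * int n + 1) * (h (2 * int n + 2) * Gtn n))"

abbreviation cs where "cs j \<equiv> cos (\<theta> j)"
abbreviation sn where "sn j \<equiv> sin (\<theta> j)"

lemma mid_a: assumes "n < K"
  shows "g (2 * int n + 2) * g (2 * int n + 1) * (g (2 * int n + 1) * g (2 * int n + 2))
    = 1 + c (sn (2 * int n + 2) / b (2 * int n + 2)) * h (2 * int n + 2)
        + c (sn (2 * int n + 1) * cs (2 * int n + 2) / b (2 * int n + 1)) * h (2 * int n + 1)"
proof -
  let ?g1 = "g (2 * int n + 1)" and ?g2 = "g (2 * int n + 2)"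
  have r1: "1 \<le> 2 * int n + 1" "2 * int n + 1 \<le> 2 * int K" "1 \<le> 2 * int n + 2" "2 * int n + 2 \<le> 2 * int K"
    using assms by auto
  have "?g2 * ?g1 * (?g1 * ?g2) = ?g2 * (?g1 * ?g1) * ?g2" by (simp add: mult.assoc)
  also have "\<dots> = ?g2 * ?g2 + c (sn (2 * int n + 1) / b (2 * int n + 1)) * (?g2 * h (2 * int n + 1) * ?g2)"
    using r1 by (simp add: g_sq distrib_left distrib_right c_left mult.assoc)
  also have "?g2 * h (2 * int n + 1) * ?g2 = h (2 * int n + 1) * (gb (2 * int n + 2) * ?g2)"
    by (simp add: g_h_anti mult.assoc)
  also have "gb (2 * int n + 2) * ?g2 = c (cs (2 * int n + 2))"
    using r1 by (simp add: gb_g)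
  finally show ?thesis
    using r1 by (simp add: g_sq cnorm add.assoc)
qed

lemma VV_Suc: assumes "n < K"
  shows "VV (Suc n) = VV n + c (sn (2 * int n + 2) / b (2 * int n + 2)) * EE n
        + c (sn (2 * int n + 1) * cs (2 * int n + 2) / b (2 * int n + 1)) * FF n"
proof -
  have "VV (Suc n) = Gpn n * ((g (2 * int n + 2) * g (2 * int n + 1) * (g (2 * int n + 1) * g (2 * int n + 2))) * Gtn n)"
    by (simp add: VV_def mult.assoc)
  then show ?thesis
    using assms by (simp only: mid_a) (simp add: VV_def EE_def FF_def distrib_left distrib_right Gp_left mult.assoc)
qed


lemma gb_h_com: assumes "\<bar>i - j\<bar> \<notin> {1, 2}" shows "gb j * h i = h i * gb j"
proof -
  have "h j * h i = h i * h j" using h_com[of j i] assms by (auto simp: abs_minus_commute)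
  then show ?thesis unfolding gbar_def by (simp add: cnorm)
qed

lemma g_h_anti': "\<bar>i - j\<bar> \<in> {1, 2} \<Longrightarrow> g j * (h i * X) = h i * (gb j * X)"
  by (metis g_h_anti mult.assoc)
lemma gb_h_anti': "\<bar>i - j\<bar> \<in> {1, 2} \<Longrightarrow> gb j * (h i * X) = h i * (g j * X)"
  by (metis gb_h_anti mult.assoc)
lemma g_h_com': "\<bar>i - j\<bar> \<notin> {1, 2} \<Longrightarrow> g j * (h i * X) = h i * (g j * X)"
  by (metis g_h_com mult.assoc)
lemma gb_h_com': "\<bar>i - j\<bar> \<notin> {1, 2} \<Longrightarrow> gb j * (h i * X) = h i * (gb j * X)"
  by (metis gb_h_com mult.assoc)
lemma gb_g': "1 \<le> j \<Longrightarrow> j \<le> 2 * int K \<Longrightarrow> gb j * (g j * X) = c (cs j) * X"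
  by (metis gb_g mult.assoc)
lemma g_sq': "1 \<le> j \<Longrightarrow> j \<le> 2 * int K \<Longrightarrow> g j * (g j * X) = X + c (sn j / b j) * (h j * X)"
  by (simp add: g_sq flip: mult.assoc) (simp add: distrib_right mult.assoc)
lemma Gp_h_com': "2 * int n + 3 \<le> i \<Longrightarrow> Gpn n * (h i * X) = h i * (Gpn n * X)"
  by (metis Gp_h_com mult.assoc)
lemma g_left: "g j * (c z * X) = c z * (g j * X)" by (simp add: c_left)
lemma gb_left: "gb j * (c z * X) = c z * (gb j * X)" by (simp add: c_left)
lemma isuc: "3 + 2 * int n = 2 * int n + 3" "4 + 2 * int n = 2 * int n + 4" by simp_all

lemmas gsimps = g_h_anti' gb_h_anti' g_h_com' gb_h_com' gb_g' g_sq' Gp_h_com' g_left gb_left Gp_left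
  mult.assoc distrib_left distrib_right h_left c_cc add.assoc isuc


lemma FF_Suc: assumes "n < K"
  shows "FF (Suc n) = c (cs (2 * int n + 1) * cs (2 * int n + 2)) * (h (2 * int n + 3) * VV n)"
  using assms unfolding FF_def VV_def by (simp add: gsimps)

lemma EE_Suc: assumes "n < K"
  shows "EE (Suc n) = h (2 * int n + 4) * (c (cs (2 * int n + 2)) * VV n
     + c (sn (2 * int n + 1) / b (2 * int n + 1)) * FF n
     + c (sn (2 * int n + 1) / b (2 * int n + 1) * (sn (2 * int n + 2) / b (2 * int n + 2))) * HH n)"
  using assms unfolding FF_def VV_def EE_def HH_def by (simp add: gsimps)

lemma HH_Suc: assumes "n < K"
  shows "HH (Suc n) = h (2 * int n + 3) * (h (2 * int n + 4) * (c (cs (2 * int n + 1)) * (VV n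
     + c (sn (2 * int n + 2) / b (2 * int n + 2)) * EE n)))"
  using assms unfolding VV_def EE_def HH_def by (simp add: gsimps)

end



lemma prod_commute_list:
  fixes f :: "'b \<Rightarrow> 'a::monoid_mult"
  assumes "\<forall>y\<in>set l. a * f y = f y * a"
  shows "a * prod_list (map f l) = prod_list (map f l) * a"
  using assms
proof (induction l)
  case (Cons y l)
  then have "a * (f y * prod_list (map f l)) = f y * (a * prod_list (map f l))"
    by (metis list.set_intros(1) mult.assoc)
  also have "\<dots> = f y * (prod_list (map f l) * a)" using Cons by simp
  finally show ?case by (simp add: mult.assoc)
qed simp

lemma prod_perm:
  fixes f :: "'b \<Rightarrow> 'a::monoid_mult"
  assumes "mset xs = mset ys" "\<forall>x\<in>set xs. \<forall>y\<in>set xs. f x * f y = f y * f x"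
  shows "prod_list (map f xs) = prod_list (map f ys)"
  using assms
proof (induction xs arbitrary: ys)
  case Nil
  then show ?case by simp
next
  case (Cons x xs)
  have "x \<in> set ys" using Cons.prems(1) by (metis list.set_intros(1) set_mset_mset)
  then obtain ys1 ys2 where ys: "ys = ys1 @ x # ys2" by (meson split_list)
  have m: "mset xs = mset (ys1 @ ys2)" using Cons.prems(1) ys by simp
  have sub: "set ys1 \<subseteq> set (x # xs)"
    using Cons.prems(1) ys by (metis Un_iff set_append set_mset_mset subsetI)
  have cm: "\<forall>y\<in>set ys1. f x * f y = f y * f x" using sub Cons.prems(2) by auto
  have "prod_list (map f ys) = prod_list (map f ys1) * (f x * prod_list (map f ys2))"
    using ys by simp
  also have "\<dots> = f x * (prod_list (map f ys1) * prod_list (map f ys2))"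
    using prod_commute_list[OF cm] by (metis mult.assoc)
  also have "\<dots> = f x * prod_list (map f (ys1 @ ys2))" by simp
  also have "\<dots> = f x * prod_list (map f xs)"
    using Cons.IH[OF m] Cons.prems(2) by simp
  finally show ?case by simp
qed

context model begin

lemma sg_sym: "sg i j = sg j i" by (simp add: sg_def abs_minus_commute)

lemma h_oi: "h i * (of_int k * y) = of_int k * (h i * y)"
  by (metis mult.assoc mult_of_int_commute)
lemma oi_oi: "of_int j * (of_int k * y) = of_int (j * k) * y"
  by (simp add: mult.assoc)
lemma h_oi1: "h i * of_int k = of_int k * h i"
  by (metis mult_of_int_commute)

lemma sg_pm: "sg i j = 1 \<or> sg i j = -1" by (simp add: sg_def)

lemma h_triple: "h l * (h a * h d * h e) = of_int (sg l a * sg l d * sg l e) * (h a * h d * h e * h l)"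
proof -
  have "h l * (h a * h d * h e) = (h l * h a) * (h d * h e)" by (simp add: mult.assoc)
  also have "\<dots> = of_int (sg l a) * (h a * ((h l * h d) * h e))"
    by (simp only: h_swap[of l a] mult.assoc h_oi)
  also have "\<dots> = of_int (sg l a) * (of_int (sg l d) * (h a * (h d * (h l * h e))))"
    by (simp only: h_swap[of l d] mult.assoc h_oi)
  also have "\<dots> = of_int (sg l a) * (of_int (sg l d) * (of_int (sg l e) * (h a * (h d * (h e * h l)))))"
    by (simp only: h_swap[of l e] mult.assoc h_oi)
  finally show ?thesis by (simp only: oi_oi mult.assoc)
qed

lemma h_triple_r: "(h a * h d * h e) * h l = of_int (sg l a * sg l d * sg l e) * (h l * (h a * h d * h e))"
proof -
  have s: "sg l a * sg l d * sg l e * (sg l a * sg l d * sg l e) = 1"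
    using sg_pm[of l a] sg_pm[of l d] sg_pm[of l e] by auto
  have "of_int (sg l a * sg l d * sg l e) * (h l * (h a * h d * h e))
     = of_int (sg l a * sg l d * sg l e) * (of_int (sg l a * sg l d * sg l e) * (h a * h d * h e * h l))"
    by (simp only: h_triple)
  also have "\<dots> = h a * h d * h e * h l"
    by (simp only: oi_oi s of_int_1 mult_1)
  finally show ?thesis by simp
qed

lemma triple_triple:
  "(h a * h d * h e) * (h a' * h d' * h e') =
     of_int ((sg a' a * sg a' d * sg a' e) * (sg d' a * sg d' d * sg d' e) * (sg e' a * sg e' d * sg e' e))
     * ((h a' * h d' * h e') * (h a * h d * h e))"
proof -
  let ?T = "h a * h d * h e"
  let ?s1 = "sg a' a * sg a' d * sg a' e" and ?s2 = "sg d' a * sg d' d * sg d' e" and ?s3 = "sg e' a * sg e' d * sg e' e"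
  have "?T * (h a' * h d' * h e') = ((?T * h a') * h d') * h e'" by (simp only: mult.assoc)
  also have "\<dots> = ((of_int ?s1 * (h a' * ?T)) * h d') * h e'"
    by (simp only: h_triple_r)
  also have "\<dots> = of_int ?s1 * (h a' * (?T * h d')) * h e'"
    by (simp only: mult.assoc)
  also have "\<dots> = of_int ?s1 * (h a' * (of_int ?s2 * (h d' * ?T))) * h e'"
    by (simp only: h_triple_r)
  also have "\<dots> = of_int (?s1 * ?s2) * (h a' * (h d' * (?T * h e')))"
    by (simp only: mult.assoc h_oi oi_oi)
  also have "\<dots> = of_int (?s1 * ?s2) * (h a' * (h d' * (of_int ?s3 * (h e' * ?T))))"
    by (simp only: h_triple_r)
  also have "\<dots> = of_int (?s1 * ?s2 * ?s3) * ((h a' * h d' * h e') * ?T)"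
    by (simp only: mult.assoc h_oi oi_oi)
  finally show ?thesis .
qed


abbreviation vv where "vv \<equiv> vval c b \<beta>3 \<beta>5 h"

lemma vv0: "vv (0, l) = h l" by simp
lemma vv1: "vv (1, m) = c (betaf b \<beta>3 \<beta>5 (nat m - 1)) * (h (2*m - 2) * h (2*m - 3) * h (2*m))"
  by (simp add: mult.assoc)

lemma sg_far1: "i \<ge> j + 3 \<Longrightarrow> sg i j = 1" by (simp add: sg_def)
lemma sg_far2: "j \<ge> i + 3 \<Longrightarrow> sg i j = 1" by (simp add: sg_def)
lemma sg_eq: "sg i i = 1" by (simp add: sg_def)
lemma sg_p1: "i = j + 1 \<Longrightarrow> sg i j = -1" by (simp add: sg_def)
lemma sg_p2: "i = j + 2 \<Longrightarrow> sg i j = -1" by (simp add: sg_def)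
lemma sg_m1: "j = i + 1 \<Longrightarrow> sg i j = -1" by (simp add: sg_def)
lemma sg_m2: "j = i + 2 \<Longrightarrow> sg i j = -1" by (simp add: sg_def)
lemmas sgs = sg_far1 sg_far2 sg_eq sg_p1 sg_p2 sg_m1 sg_m2

lemma sg1: "\<not> bar_adj m l \<Longrightarrow> sg l (2*m-2) * sg l (2*m-3) * sg l (2*m) = 1"
proof -
  assume a: "\<not> bar_adj m l"
  have "l \<le> 2*m - 7 \<or> l = 2*m-6 \<or> l = 2*m - 4 \<or> l = 2*m-2 \<or> l \<ge> 2*m+3"
    using a unfolding bar_adj_def by simp arith
  then consider "l \<le> 2*m - 7" | "l = 2*m-6" | "l = 2*m - 4" | "l = 2*m-2" | "l \<ge> 2*m+3" by blast
  then show ?thesis by cases (simp_all add: sgs)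
qed

lemma sg2: assumes "\<bar>m - m'\<bar> \<noteq> 1" "m \<noteq> m'"
  shows "(sg (2*m'-2) (2*m-2) * sg (2*m'-2) (2*m-3) * sg (2*m'-2) (2*m)) *
         (sg (2*m'-3) (2*m-2) * sg (2*m'-3) (2*m-3) * sg (2*m'-3) (2*m)) *
         (sg (2*m') (2*m-2) * sg (2*m') (2*m-3) * sg (2*m') (2*m)) = 1"
proof -
  have "m' = m + 2 \<or> m = m' + 2 \<or> m' \<ge> m + 3 \<or> m \<ge> m' + 3" using assms by arith
  then consider "m' = m + 2" | "m = m' + 2" | "m' \<ge> m + 3" | "m \<ge> m' + 3" by blast
  then show ?thesis by cases (simp_all add: sgs)
qed

lemma T_h_com: assumes "\<not> bar_adj m l" shows "h l * (h (2*m - 2) * h (2*m - 3) * h (2*m)) = (h (2*m - 2) * h (2*m - 3) * h (2*m)) * h l"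
  by (simp only: h_triple[of l "2*m-2" "2*m-3" "2*m"] sg1[OF assms] of_int_1 mult_1_left)

lemma T_h_com': assumes "\<not> bar_adj m l" shows "h l * (h (2*m - 2) * (h (2*m - 3) * h (2*m))) = h (2*m - 2) * (h (2*m - 3) * (h (2*m) * h l))"
  using T_h_com[OF assms] by (simp only: mult.assoc)

lemma T_T_com: "\<bar>m - m'\<bar> \<noteq> 1 \<Longrightarrow> (h (2*m - 2) * h (2*m - 3) * h (2*m)) * (h (2*m' - 2) * h (2*m' - 3) * h (2*m'))
   = (h (2*m' - 2) * h (2*m' - 3) * h (2*m')) * (h (2*m - 2) * h (2*m - 3) * h (2*m))"
proof (cases "m = m'")
  case False
  assume a: "\<bar>m - m'\<bar> \<noteq> 1"
  show ?thesis
    by (simp only: triple_triple[of "2*m - 2" "2*m - 3" "2*m" "2*m' - 2" "2*m' - 3" "2*m'"] sg2[OF a False] of_int_1 mult_1_left)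
qed simp

lemma cAcB: "(c p * A) * (c q * B) = c (p * q) * (A * B)"
proof -
  have "(c p * A) * (c q * B) = c p * ((A * c q) * B)" by (simp add: mult.assoc)
  also have "\<dots> = c p * (c q * (A * B))" by (simp only: c_comm[of q A, symmetric] mult.assoc)
  finally show ?thesis by (simp add: c_cc)
qed

lemma vv_comm: assumes "fst u \<le> 1" "fst w \<le> 1" "\<not> adj u w"
  shows "vv u * vv w = vv w * vv u"
proof -
  obtain a x where u: "u = (a, x)" by fastforce
  obtain a' y where w: "w = (a', y)" by fastforce
  have a: "a = 0 \<or> a = 1" "a' = 0 \<or> a' = 1" using assms u w by auto
  show ?thesis
  proof (cases "a = 0")
    case True
    note a0 = True
    show ?thesis
    proof (cases "a' = 0")
      case True
      then show ?thesis using a0 assms u w h_com[of x y] by simp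
    next
      case False
      then have "a' = 1" using a by auto
      then have nb: "\<not> bar_adj y x" using a0 assms u w by simp
      show ?thesis using a0 \<open>a' = 1\<close> u w
        by (simp only: vv0 vv1) (simp add: h_left h_c T_h_com'[OF nb] mult.assoc)
    qed
  next
    case False
    then have a1: "a = 1" using a by auto
    show ?thesis
    proof (cases "a' = 0")
      case True
      then have nb: "\<not> bar_adj x y" using a1 assms u w by simp
      show ?thesis using a1 True u w
        by (simp only: vv0 vv1) (simp add: h_left h_c T_h_com'[OF nb, symmetric] mult.assoc)
    next
      case False
      then have "a' = 1" using a by auto
      then have nb: "\<bar>x - y\<bar> \<noteq> 1" using a1 assms u w by simp
      show ?thesis using a1 \<open>a' = 1\<close> u w
        by (simp only: vv1 cAcB T_T_com[OF nb]) (simp add: mult.commute)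
    qed
  qed
qed


lemma adj_sym: "adj u w = adj w u"
  by (cases u; cases w) (auto simp: abs_minus_commute)

lemma adj_irr: "\<not> adj u u"
  by (cases u) auto

definition pr :: "vtx set \<Rightarrow> 'a" where
  "pr S = prod_list (map vv (sorted_list_of_set S))"

definition SS :: "vtx set \<Rightarrow> 'a" where
  "SS X = (\<Sum>S \<in> {S. indep X S}. pr S)"

lemma pr_insert:
  assumes fin: "finite S" and vS: "v \<notin> S" and f1: "\<forall>u\<in>insert v S. fst u \<le> 1"
    and ind: "\<forall>u\<in>insert v S. \<forall>w\<in>insert v S. \<not> adj u w"
  shows "pr (insert v S) = vv v * pr S"
proof -
  have fin2: "finite (insert v S)" using fin by simp
  have m: "mset (sorted_list_of_set (insert v S)) = mset (v # sorted_list_of_set S)"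
    using fin fin2 vS by (simp add: set_eq_iff_mset_eq_distinct[symmetric])
  have cm: "\<forall>x\<in>set (sorted_list_of_set (insert v S)). \<forall>y\<in>set (sorted_list_of_set (insert v S)).
      vv x * vv y = vv y * vv x"
  proof -
    have sl: "set (sorted_list_of_set (insert v S)) = insert v S" using fin2 by (simp only: set_sorted_list_of_set)
    show ?thesis unfolding sl using f1 ind by (blast intro: vv_comm)
  qed
  show ?thesis unfolding pr_def using prod_perm[OF m cm] by simp
qed

lemma SS_del:
  assumes fin: "finite X" and vX: "v \<in> X" and f1: "\<forall>u\<in>X. fst u \<le> 1"
  shows "SS X = SS (X - {v}) + vv v * SS (X - {v} - {w. adj v w})"
proof -
  let ?A0 = "{S. indep (X - {v}) S}" and ?A1 = "{S. indep (X - {v} - {w. adj v w}) S}"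
  have fA0: "finite ?A0" by (rule finite_subset[of _ "Pow X"]) (auto simp: indep_def fin)
  have fA1: "finite ?A1" by (rule finite_subset[of _ "Pow X"]) (auto simp: indep_def fin)
  have split: "{S. indep X S} = ?A0 \<union> insert v ` ?A1"
  proof (rule set_eqI, rule iffI)
    fix S assume "S \<in> {S. indep X S}"
    then have iS: "indep X S" by simp
    show "S \<in> ?A0 \<union> insert v ` ?A1"
    proof (cases "v \<in> S")
      case False
      then show ?thesis using iS by (auto simp: indep_def)
    next
      case True
      then have "S = insert v (S - {v})" by auto
      moreover have "S - {v} \<in> ?A1" using iS True by (auto simp: indep_def)
      ultimately show ?thesis by blast
    qed
  next
    fix S assume "S \<in> ?A0 \<union> insert v ` ?A1"
    then show "S \<in> {S. indep X S}"
      using vX adj_irr adj_sym by (auto simp: indep_def; blast)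
  qed
  have disj: "?A0 \<inter> insert v ` ?A1 = {}" by (auto simp: indep_def)
  have inj: "inj_on (insert v) ?A1"
    by (rule inj_onI) (auto simp: indep_def; blast)
  have "SS X = SS (X - {v}) + (\<Sum>S \<in> insert v ` ?A1. pr S)"
    unfolding SS_def split using fA0 fA1 disj by (simp add: sum.union_disjoint)
  also have "(\<Sum>S \<in> insert v ` ?A1. pr S) = (\<Sum>S \<in> ?A1. pr (insert v S))"
    using inj by (simp add: sum.reindex)
  also have "\<dots> = (\<Sum>S \<in> ?A1. vv v * pr S)"
  proof (rule sum.cong)
    fix S assume "S \<in> ?A1"
    then have iS: "indep (X - {v} - {w. adj v w}) S" by simp
    have finS: "finite S" using iS fin by (auto simp: indep_def intro: finite_subset)
    show "pr (insert v S) = vv v * pr S"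
    proof (rule pr_insert[OF finS])
      show "v \<notin> S" using iS by (auto simp: indep_def)
      show "\<forall>u\<in>insert v S. fst u \<le> 1" using iS vX f1 by (auto simp: indep_def)
      show "\<forall>u\<in>insert v S. \<forall>w\<in>insert v S. \<not> adj u w"
        using iS adj_irr adj_sym by (auto simp: indep_def; blast)
    qed
  qed simp
  also have "\<dots> = vv v * SS (X - {v} - {w. adj v w})"
    unfolding SS_def by (simp add: sum_distrib_left)
  finally show ?thesis .
qed


lemma vset_mem: "(a, l) \<in> vset j \<longleftrightarrow> (a = 0 \<and> 1 \<le> l \<and> l \<le> j) \<or> (a = 1 \<and> 2 \<le> l \<and> l \<le> j div 2)"
  by (auto simp: vset_def)

lemma vset_fin: "finite (vset j)"
proof -
  have "vset j \<subseteq> Pair 0 ` {1..j} \<union> Pair 1 ` {2..j div 2}" by (auto simp: vset_def)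
  then show ?thesis by (rule finite_subset) auto
qed

lemma vset_fst: "\<forall>u\<in>vset j. fst u \<le> 1" by (auto simp: vset_def)

lemma vset_le0: "j \<le> 0 \<Longrightarrow> vset j = {}" by (auto simp: vset_def)

lemma SS_empty: "SS {} = 1"
proof -
  have "{S. indep {} S} = {{}}" by (auto simp: indep_def)
  then show ?thesis by (simp add: SS_def pr_def)
qed

lemma transfer_SS: "transfer c b \<beta>3 \<beta>5 h j (-1) = SS (vset j)"
proof (cases "j \<le> 0")
  case True
  then show ?thesis by (simp add: transfer_def vset_le0 SS_empty)
next
  case False
  let ?V = "vset j"
  let ?A = "{S. indep ?V S}"
  have fA: "finite ?A" by (rule finite_subset[of _ "Pow ?V"]) (auto simp: indep_def vset_fin)
  have im: "card ` ?A \<subseteq> {0..card ?V}" by (auto simp: indep_def vset_fin card_mono)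
  have "transfer c b \<beta>3 \<beta>5 h j (-1) = (\<Sum>k\<in>{0..card ?V}. charge c b \<beta>3 \<beta>5 h j k)"
    using False by (simp add: transfer_def)
  also have "\<dots> = (\<Sum>k\<in>{0..card ?V}. \<Sum>S\<in>{S. S \<in> ?A \<and> card S = k}. pr S)"
    unfolding charge_def pr_def by simp
  also have "\<dots> = (\<Sum>S\<in>?A. pr S)"
    by (rule sum.group[OF fA _ im]) simp
  finally show ?thesis by (simp add: SS_def)
qed

lemma dv1: "(2*k - 1) div 2 = k - (1::int)" by presburger
lemma dv3: "(2*k - 3) div 2 = k - (2::int)" by presburger
lemma dv4: "(2*k - 4) div 2 = k - (2::int)" by presburger
lemma dv6: "(2*k - 6) div 2 = k - (3::int)" by presburger
lemma dv8: "(2*k - 8) div 2 = k - (4::int)" by presburger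
lemma dv2: "(2*k - 2) div 2 = k - (1::int)" by presburger
lemmas dvs = dv1 dv2 dv3 dv4 dv6 dv8

lemma S1: "k \<ge> 2 \<Longrightarrow> vset (2*k) - {(0, 2*k)} = insert (1, k) (vset (2*k - 1))"
  by (rule set_eqI, case_tac x, auto simp: vset_mem dvs)

lemma S2: "k \<ge> 2 \<Longrightarrow> vset (2*k) - {(0, 2*k)} - {w. adj (0, 2*k) w} = vset (2*k - 3)"
  by (rule set_eqI, case_tac x, auto simp: vset_mem dvs bar_adj_def; presburger)

lemma S3: "k \<ge> 2 \<Longrightarrow> insert (1, k) (vset (2*k - 1)) - {(1, k)} = vset (2*k - 1)"
  by (rule set_eqI, case_tac x, auto simp: vset_mem dvs)

lemma S4: "k \<ge> 2 \<Longrightarrow> insert (1, k) (vset (2*k - 1)) - {(1, k)} - {w. adj (1, k) w}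
    = insert (0, 2*k - 2) (vset (2*k - 4) - {(0, 2*k - 5)})"
  by (rule set_eqI, case_tac x, auto simp: vset_mem dvs bar_adj_def; presburger)

lemma S5: "m \<ge> 1 \<Longrightarrow> vset (2*m - 1) - {(0, 2*m - 1)} = vset (2*m - 2)"
  by (rule set_eqI, case_tac x, auto simp: vset_mem dvs)

lemma S6: "m \<ge> 1 \<Longrightarrow> vset (2*m - 1) - {(0, 2*m - 1)} - {w. adj (0, 2*m - 1) w} = vset (2*m - 4)"
  by (rule set_eqI, case_tac x, auto simp: vset_mem dvs bar_adj_def; presburger)

lemma S7: "k \<ge> 2 \<Longrightarrow> insert (0, 2*k - 2) (vset (2*k - 4) - {(0, 2*k - 5)}) - {(0, 2*k - 2)}
    = vset (2*k - 4) - {(0, 2*k - 5)}"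
  by (rule set_eqI, case_tac x, auto simp: vset_mem dvs)

lemma S8: "k \<ge> 2 \<Longrightarrow> insert (0, 2*k - 2) (vset (2*k - 4) - {(0, 2*k - 5)}) - {(0, 2*k - 2)}
    - {w. adj (0, 2*k - 2) w} = vset (2*k - 6)"
  by (rule set_eqI, case_tac x, auto simp: vset_mem dvs bar_adj_def; presburger)

lemma S9: "m \<ge> 1 \<Longrightarrow> vset (2*m) - {(0, 2*m - 1)} - {w. adj (0, 2*m - 1) w} = vset (2*m - 4)"
  by (rule set_eqI, case_tac x, auto simp: vset_mem dvs bar_adj_def; presburger)

lemma S10: "vset 2 - {(0, 2)} = vset 1"
  by (rule set_eqI, case_tac x, auto simp: vset_mem)

lemma S11: "vset 2 - {(0, 2)} - {w. adj (0, 2) w} = {}"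
  by (rule set_eqI, case_tac x, auto simp: vset_mem)

end

context model begin



abbreviation ts where "ts j \<equiv> SS (vset j)"

lemma ts_le0: "j \<le> 0 \<Longrightarrow> ts j = 1" by (simp add: vset_le0 SS_empty)

lemma T_odd: assumes "m \<ge> 1" shows "ts (2*m - 1) = ts (2*m - 2) + h (2*m - 1) * ts (2*m - 4)"
proof -
  have v: "(0, 2*m - 1) \<in> vset (2*m - 1)" using assms by (simp add: vset_mem)
  show ?thesis using SS_del[OF vset_fin v vset_fst] S5[OF assms] S6[OF assms] by simp
qed

lemma T_X: "ts (2*m) = SS (vset (2*m) - {(0, 2*m - 1)}) + h (2*m - 1) * ts (2*m - 4)"
proof (cases "m \<ge> 1")
  case True
  have v: "(0, 2*m - 1) \<in> vset (2*m)" using True by (simp add: vset_mem)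
  show ?thesis using SS_del[OF vset_fin v vset_fst] S9[OF True] by simp
next
  case False
  then show ?thesis using h_out[of "2*m - 1"] by (simp add: vset_le0)
qed

lemma T_even: assumes k2: "k \<ge> 2"
  shows "ts (2*k) = ts (2*k - 2) + h (2*k - 1) * ts (2*k - 4)
     + h (2*k) * (ts (2*k - 4) + h (2*k - 3) * ts (2*k - 6))
     + vv (1, k) * ((ts (2*k - 4) - h (2*k - 5) * ts (2*k - 8)) + h (2*k - 2) * ts (2*k - 6))"
proof -
  let ?X1 = "insert (1, k) (vset (2*k - 1))"
  let ?Y = "insert (0, 2*k - 2) (vset (2*k - 4) - {(0, 2*k - 5)})"
  have v1: "(0, 2*k) \<in> vset (2*k)" using k2 by (simp add: vset_mem)
  have e1: "ts (2*k) = SS ?X1 + h (2*k) * ts (2*k - 3)"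
    using SS_del[OF vset_fin v1 vset_fst] S1[OF k2] S2[OF k2] by simp
  have f1: "finite ?X1" by (simp add: vset_fin)
  have fs1: "\<forall>u\<in>?X1. fst u \<le> 1" using vset_fst by auto
  have e2: "SS ?X1 = ts (2*k - 1) + vv (1, k) * SS ?Y"
    using SS_del[OF f1 _ fs1, of "(1, k)"] S3[OF k2] S4[OF k2] by simp
  have e3: "ts (2*k - 1) = ts (2*k - 2) + h (2*k - 1) * ts (2*k - 4)"
    using T_odd[of k] k2 by simp
  have e4: "ts (2*k - 3) = ts (2*k - 4) + h (2*k - 3) * ts (2*k - 6)"
  proof -
    have "ts (2*(k-1) - 1) = ts (2*(k-1) - 2) + h (2*(k-1) - 1) * ts (2*(k-1) - 4)"
      using T_odd[of "k-1"] k2 by simp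
    moreover have "2*(k-1) - 1 = 2*k - 3" "2*(k-1) - 2 = 2*k - 4" "2*(k-1) - 4 = 2*k - 6" by simp_all
    ultimately show ?thesis by simp
  qed
  have fY: "finite ?Y" by (simp add: vset_fin)
  have fsY: "\<forall>u\<in>?Y. fst u \<le> 1" using vset_fst by auto
  have e5: "SS ?Y = SS (vset (2*k - 4) - {(0, 2*k - 5)}) + h (2*k - 2) * ts (2*k - 6)"
    using SS_del[OF fY _ fsY, of "(0, 2*k - 2)"] S7[OF k2] S8[OF k2] by simp
  have e6: "ts (2*k - 4) = SS (vset (2*k - 4) - {(0, 2*k - 5)}) + h (2*k - 5) * ts (2*k - 8)"
  proof -
    have "ts (2*(k-2)) = SS (vset (2*(k-2)) - {(0, 2*(k-2) - 1)}) + h (2*(k-2) - 1) * ts (2*(k-2) - 4)"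
      by (rule T_X)
    moreover have "2*(k-2) = 2*k - 4" "2*(k-2) - 1 = 2*k - 5" "2*(k-2) - 4 = 2*k - 8" by simp_all
    ultimately show ?thesis by simp
  qed
  have e5': "SS ?Y = (ts (2*k - 4) - h (2*k - 5) * ts (2*k - 8)) + h (2*k - 2) * ts (2*k - 6)"
    using e5 e6 by (simp add: algebra_simps)
  show ?thesis unfolding e1 e2 e3 e4 e5' by (simp add: add_ac)
qed

lemma T_one: "ts 2 = 1 + h 1 + h 2"
proof -
  have v: "(0, 2) \<in> vset 2" by (simp add: vset_mem)
  have a0: "ts 2 = SS (vset 2 - {(0, 2)}) + h 2 * SS (vset 2 - {(0, 2)} - {w. adj (0, 2) w})"
    using SS_del[OF vset_fin v vset_fst] by simp
  have a: "ts 2 = ts 1 + h 2"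
    using a0 unfolding S11 unfolding S10 SS_empty by simp
  have "ts 1 = ts 0 + h 1 * ts (-2)" using T_odd[of 1] by simp
  then show ?thesis using a ts_le0[of 0] ts_le0[of "-2"] by simp
qed


lemma cs_nz: "-1 \<le> j \<Longrightarrow> j \<le> 2 * int K \<Longrightarrow> cs j \<noteq> 0"
proof -
  assume a: "-1 \<le> j" "j \<le> 2 * int K"
  show ?thesis
  proof (cases "j \<ge> 1")
    case True then show ?thesis using cos_nz a by auto
  next
    case False
    then have "j = 0 \<or> j = -1" using a by auto
    then show ?thesis using th0 thm1 by auto
  qed
qed

lemma b_sq: assumes "1 \<le> j" "j \<le> int K"
  shows "(b (2*j))\<^sup>2 = (1 - (cs (2*j))\<^sup>2) * (cs (2*j - 2))\<^sup>2"
proof -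
  have nz: "cs (2*j - 2) \<noteq> 0" using cs_nz assms by auto
  have "b (2*j) = sn (2*j) * cs (2*j - 2)" using sin_even[OF assms] nz by simp
  then show ?thesis by (simp add: power_mult_distrib sin_squared_eq)
qed

lemma beta_formula: "1 \<le> m \<Longrightarrow> m < K \<Longrightarrow>
   betaf b \<beta>3 \<beta>5 m = 1 / ((cs (2 * int m - 2))\<^sup>2 * (cs (2 * int m))\<^sup>2)"
proof (induction m rule: less_induct)
  case (less m)
  consider "m = 1" | "m = 2" | n where "m = n + 3" using less.prems
    by (metis One_nat_def Suc_1 add.commute add_2_eq_Suc' le_Suc_eq le_add_diff_inverse le_zero_eq numeral_3_eq_3 not_less_eq_eq)
  then show ?case
  proof cases
    case 1
    have "(b 2)\<^sup>2 = 1 - (cs 2)\<^sup>2" using b_sq[of 1] k1 th0 by simp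
    then show ?thesis using 1 beta3 th0 by simp
  next
    case 2
    have K2: "int K \<ge> 2" using less.prems 2 by simp
    have b2: "(b 2)\<^sup>2 = 1 - (cs 2)\<^sup>2" using b_sq[of 1] k1 th0 by simp
    have b4: "(b 4)\<^sup>2 = (1 - (cs 4)\<^sup>2) * (cs 2)\<^sup>2" using b_sq[of 2] K2 by simp
    have nz: "cs 2 \<noteq> 0" using cs_nz[of 2] K2 by simp
    have bf2: "betaf b \<beta>3 \<beta>5 2 = \<beta>5" by (simp add: numeral_2_eq_2)
    have "\<beta>5 = 1 / ((cs 2)\<^sup>2 * (cs 4)\<^sup>2)" using beta5 b2 b4 nz by (simp add: field_simps)
    then show ?thesis using 2 bf2 by simp
  next
    case 3
    let ?C = "\<lambda>i::int. (cs (2 * i))\<^sup>2"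
    have IH1: "betaf b \<beta>3 \<beta>5 (n + 1) = 1 / (?C (int n) * ?C (int n + 1))"
      using less.IH[of "n+1"] less.prems 3 by (simp add: algebra_simps)
    have IH2: "betaf b \<beta>3 \<beta>5 (n + 2) = 1 / (?C (int n + 1) * ?C (int n + 2))"
      using less.IH[of "n+2"] less.prems 3 by (simp add: algebra_simps)
    have nz: "?C (int n) \<noteq> 0" "?C (int n + 1) \<noteq> 0" "?C (int n + 2) \<noteq> 0" "?C (int n + 3) \<noteq> 0"
      using cs_nz less.prems 3 by simp_all
    have ba: "(b (2 * (int n + 1)))\<^sup>2 = (1 - ?C (int n + 1)) * ?C (int n)"
      using b_sq[of "int n + 1"] less.prems 3 by (simp add: algebra_simps)
    have bb: "(b (2 * (int n + 3)))\<^sup>2 = (1 - ?C (int n + 3)) * ?C (int n + 2)"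
      using b_sq[of "int n + 3"] less.prems 3 by (simp add: algebra_simps)
    have e: "betaf b \<beta>3 \<beta>5 (n + 3) = betaf b \<beta>3 \<beta>5 (n + 2) /
       ((b (2 * (int n + 1)))\<^sup>2 * betaf b \<beta>3 \<beta>5 (n + 1)
        - (b (2 * (int n + 3)))\<^sup>2 * betaf b \<beta>3 \<beta>5 (n + 2) + 1)"
    proof -
      have "n + 3 = Suc (Suc (Suc n))" by simp
      moreover have "2 * int (n + 3) - 4 = 2 * (int n + 1)" "2 * int (n + 3) = 2 * (int n + 3)" by simp_all
      ultimately show ?thesis by (simp only: betaf.simps) (simp add: numeral_2_eq_2 numeral_3_eq_3)
    qed
    have goal: "betaf b \<beta>3 \<beta>5 (n + 3) = 1 / (?C (int n + 2) * ?C (int n + 3))"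
      unfolding e IH1 IH2 ba bb using nz by (simp add: field_simps)
    show ?thesis using goal 3 by (simp add: algebra_simps)
  qed
qed


lemma co_odd: assumes "1 \<le> j" "j \<le> int K"
  shows "sn (2*j - 1) * cs (2*j) / b (2*j - 1) * (cs (2*j - 3) * cs (2*j - 2)) = 1"
proof -
  have nz: "cs (2*j) \<noteq> 0" "cs (2*j - 2) \<noteq> 0" "cs (2*j - 3) \<noteq> 0" "b (2*j - 1) \<noteq> 0"
    using cs_nz b_nz assms by auto
  show ?thesis using sin_odd[OF assms] nz by (simp add: field_simps)
qed

lemma FF_closed: "n \<le> K \<Longrightarrow> FF n = c (cs (2 * int n - 1) * cs (2 * int n)) * (h (2 * int n + 1) * VV (n - 1))"
proof (cases n)
  case 0
  then show ?thesis using th0 thm1 by (simp add: FF_def VV_def)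
next
  case (Suc m)
  assume "n \<le> K"
  then have "m < K" using Suc by simp
  then show ?thesis using FF_Suc[of m] Suc by (simp add: algebra_simps)
qed

lemma HH_closed: "n \<le> K \<Longrightarrow> HH n = c (cs (2 * int n - 1)) * (h (2 * int n + 1) * (h (2 * int n + 2) *
     (VV (n - 1) + c (sn (2 * int n) / b (2 * int n)) * EE (n - 1))))"
proof (cases n)
  case 0
  then show ?thesis using th0 thm1 by (simp add: HH_def VV_def)
next
  case (Suc m)
  assume "n \<le> K"
  then have "m < K" using Suc by simp
  then show ?thesis using HH_Suc[of m] Suc by (simp add: algebra_simps h_left)
qed

lemma E_rel: "n \<le> K \<Longrightarrow> c (sn (2 * int n) / b (2 * int n)) * EE (n - 1) = VV n - VV (n - 1) - h (2 * int n - 1) * VV (n - 2)"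
proof (cases n)
  case 0
  then show ?thesis using th0 h_out[of "-1"] by simp
next
  case (Suc m)
  assume a: "n \<le> K"
  then have mK: "m < K" using Suc by simp
  have co: "sn (2 * int m + 1) * cs (2 * int m + 2) / b (2 * int m + 1) * (cs (2 * int m - 1) * cs (2 * int m)) = 1"
    using co_odd[of "int m + 1"] mK by (simp add: algebra_simps)
  have "VV (Suc m) = VV m + c (sn (2 * int m + 2) / b (2 * int m + 2)) * EE m
        + c (sn (2 * int m + 1) * cs (2 * int m + 2) / b (2 * int m + 1)) * FF m"
    by (rule VV_Suc[OF mK])
  also have "c (sn (2 * int m + 1) * cs (2 * int m + 2) / b (2 * int m + 1)) * FF m = h (2 * int m + 1) * VV (m - 1)"
    using FF_closed[of m] mK co by (simp add: c_cc)
  finally have "VV (Suc m) = VV m + c (sn (2 * int m + 2) / b (2 * int m + 2)) * EE m + h (2 * int m + 1) * VV (m - 1)" .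
  then show ?thesis using Suc by (simp add: algebra_simps)
qed

lemma VV_rec1: assumes "n < K"
  shows "VV (Suc n) = VV n + h (2 * int n + 1) * VV (n - 1) + c (sn (2 * int n + 2) / b (2 * int n + 2)) * EE n"
proof -
  have "c (sn (2 * int (Suc n)) / b (2 * int (Suc n))) * EE (Suc n - 1) = VV (Suc n) - VV (Suc n - 1) - h (2 * int (Suc n) - 1) * VV (Suc n - 2)"
    using E_rel[of "Suc n"] assms by simp
  then have "c (sn (2 * int n + 2) / b (2 * int n + 2)) * EE n = VV (Suc n) - VV n - h (2 * int n + 1) * VV (n - 1)"
    by (simp add: algebra_simps)
  then show ?thesis by (simp add: algebra_simps)
qed


lemma VV_rec2: assumes mK: "m + 2 \<le> K"
  shows "VV (m + 2) = VV (m + 1) + h (2 * int m + 3) * VV m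
     + c (sn (2 * int m + 4) / b (2 * int m + 4) * cs (2 * int m + 2)) * (h (2 * int m + 4) * VV m)
     + c (sn (2 * int m + 4) / b (2 * int m + 4) * (sn (2 * int m + 1) / b (2 * int m + 1)) * (cs (2 * int m - 1) * cs (2 * int m)))
         * (h (2 * int m + 4) * (h (2 * int m + 1) * VV (m - 1)))
     + c (sn (2 * int m + 4) / b (2 * int m + 4) * (sn (2 * int m + 1) / b (2 * int m + 1) * (sn (2 * int m + 2) / b (2 * int m + 2))) * cs (2 * int m - 1))
         * (h (2 * int m + 4) * (h (2 * int m + 1) * (h (2 * int m + 2) * (VV m - h (2 * int m - 1) * VV (m - 2)))))"
proof -
  have HHm: "HH m = c (cs (2 * int m - 1)) * (h (2 * int m + 1) * (h (2 * int m + 2) * (VV m - h (2 * int m - 1) * VV (m - 2))))"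
  proof -
    have "HH m = c (cs (2 * int m - 1)) * (h (2 * int m + 1) * (h (2 * int m + 2) *
     (VV (m - 1) + c (sn (2 * int m) / b (2 * int m)) * EE (m - 1))))" using HH_closed[of m] mK by simp
    also have "VV (m - 1) + c (sn (2 * int m) / b (2 * int m)) * EE (m - 1) = VV m - h (2 * int m - 1) * VV (m - 2)"
      using E_rel[of m] mK by simp
    finally show ?thesis .
  qed
  have FFm: "FF m = c (cs (2 * int m - 1) * cs (2 * int m)) * (h (2 * int m + 1) * VV (m - 1))"
    using FF_closed[of m] mK by simp
  have EEm: "EE (Suc m) = h (2 * int m + 4) * (c (cs (2 * int m + 2)) * VV m
     + c (sn (2 * int m + 1) / b (2 * int m + 1)) * FF m
     + c (sn (2 * int m + 1) / b (2 * int m + 1) * (sn (2 * int m + 2) / b (2 * int m + 2))) * HH m)"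
    using EE_Suc[of m] mK by simp
  have R1: "VV (m + 2) = VV (m + 1) + h (2 * int m + 3) * VV m + c (sn (2 * int m + 4) / b (2 * int m + 4)) * EE (Suc m)"
    using VV_rec1[of "Suc m"] mK by (simp add: algebra_simps)
  show ?thesis
    unfolding R1 EEm HHm FFm by (simp add: cnorm)
qed


lemma coefs: assumes mK: "m + 2 \<le> K"
  shows "sn (2 * int m + 4) / b (2 * int m + 4) * cs (2 * int m + 2) = 1"
    and "sn (2 * int m + 4) / b (2 * int m + 4) * (sn (2 * int m + 1) / b (2 * int m + 1)) * (cs (2 * int m - 1) * cs (2 * int m))
         = 1 + betaf b \<beta>3 \<beta>5 (m + 1) * (b (2 * int m + 2))\<^sup>2"
    and "sn (2 * int m + 4) / b (2 * int m + 4) * (sn (2 * int m + 1) / b (2 * int m + 1) * (sn (2 * int m + 2) / b (2 * int m + 2))) * cs (2 * int m - 1)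
         = betaf b \<beta>3 \<beta>5 (m + 1)"
proof -
  have nz: "cs (2 * int m - 1) \<noteq> 0" "cs (2 * int m) \<noteq> 0" "cs (2 * int m + 2) \<noteq> 0"
     "b (2 * int m + 1) \<noteq> 0" "b (2 * int m + 2) \<noteq> 0" "b (2 * int m + 4) \<noteq> 0"
    using cs_nz b_nz mK by auto
  have s4: "sn (2 * int m + 4) = b (2 * int m + 4) / cs (2 * int m + 2)"
  proof -
    have "2 * (int m + 2) = 2 * int m + 4" "2 * (int m + 2) - 2 = 2 * int m + 2" by simp_all
    then show ?thesis using sin_even[of "int m + 2"] mK by (simp only:; simp)
  qed
  have s1: "sn (2 * int m + 1) = b (2 * int m + 1) / (cs (2 * int m) * cs (2 * int m - 1) * cs (2 * int m + 2))"
  proof -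
    have "2 * (int m + 1) - 1 = 2 * int m + 1" "2 * (int m + 1) - 2 = 2 * int m" "2 * (int m + 1) - 3 = 2 * int m - 1"
      "2 * (int m + 1) = 2 * int m + 2" by simp_all
    then show ?thesis using sin_odd[of "int m + 1"] mK by (simp only:; simp)
  qed
  have s2: "sn (2 * int m + 2) = b (2 * int m + 2) / cs (2 * int m)"
  proof -
    have "2 * (int m + 1) = 2 * int m + 2" "2 * (int m + 1) - 2 = 2 * int m" by simp_all
    then show ?thesis using sin_even[of "int m + 1"] mK by (simp only:; simp)
  qed
  have bet: "betaf b \<beta>3 \<beta>5 (m + 1) = 1 / ((cs (2 * int m))\<^sup>2 * (cs (2 * int m + 2))\<^sup>2)"
  proof -
    have "2 * int (m + 1) - 2 = 2 * int m" "2 * int (m + 1) = 2 * int m + 2" by simp_all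
    then show ?thesis using beta_formula[of "m + 1"] mK by (simp only:; simp)
  qed
  have pyth: "(sn (2 * int m + 2))\<^sup>2 + (cs (2 * int m + 2))\<^sup>2 = 1" by simp
  show "sn (2 * int m + 4) / b (2 * int m + 4) * cs (2 * int m + 2) = 1"
    using nz s4 by simp
  show "sn (2 * int m + 4) / b (2 * int m + 4) * (sn (2 * int m + 1) / b (2 * int m + 1)) * (cs (2 * int m - 1) * cs (2 * int m))
         = 1 + betaf b \<beta>3 \<beta>5 (m + 1) * (b (2 * int m + 2))\<^sup>2"
  proof -
    have bb: "b (2 * int m + 2) = sn (2 * int m + 2) * cs (2 * int m)" using s2 nz by simp
    have "1 + betaf b \<beta>3 \<beta>5 (m + 1) * (b (2 * int m + 2))\<^sup>2 = 1 / (cs (2 * int m + 2))\<^sup>2"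
      unfolding bet bb using nz pyth by (simp add: field_simps)
    moreover have "sn (2 * int m + 4) / b (2 * int m + 4) * (sn (2 * int m + 1) / b (2 * int m + 1)) * (cs (2 * int m - 1) * cs (2 * int m))
        = 1 / (cs (2 * int m + 2))\<^sup>2"
      unfolding s4 s1 using nz by (simp add: field_simps power2_eq_square)
    ultimately show ?thesis by simp
  qed
  show "sn (2 * int m + 4) / b (2 * int m + 4) * (sn (2 * int m + 1) / b (2 * int m + 1) * (sn (2 * int m + 2) / b (2 * int m + 2))) * cs (2 * int m - 1)
         = betaf b \<beta>3 \<beta>5 (m + 1)"
    unfolding s4 s1 s2 bet using nz by (simp add: field_simps power2_eq_square)
qed

definition RR :: "(int \<Rightarrow> 'a) \<Rightarrow> int \<Rightarrow> 'a" where
  "RR f k = f (k - 1) + h (2*k - 1) * f (k - 2) + h (2*k) * f (k - 2)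
     + c (1 + betaf b \<beta>3 \<beta>5 (nat k - 1) * (b (2*k - 2))\<^sup>2) * (h (2*k) * (h (2*k - 3) * f (k - 3)))
     + c (betaf b \<beta>3 \<beta>5 (nat k - 1)) * (h (2*k) * (h (2*k - 3) * (h (2*k - 2) * (f (k - 2) - h (2*k - 5) * f (k - 4)))))"

lemma RR_cong: "(\<And>j. k - 4 \<le> j \<Longrightarrow> j \<le> k - 1 \<Longrightarrow> f j = f2 j) \<Longrightarrow> RR f k = RR f2 k"
  unfolding RR_def by simp

definition Vi where "Vi k = VV (nat k)"
definition Ti where "Ti k = ts (2 * k)"

lemma V_RR: assumes "1 \<le> k" "k \<le> int K" shows "Vi k = RR Vi k"
proof (cases "k = 1")
  case True
  have "VV (Suc 0) = VV 0 + h 1 * VV 0 + c (sn 2 / b 2) * EE 0"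
    using VV_rec1[of 0] k1 by simp
  moreover have "sn 2 / b 2 = 1" using sin_even[of 1] k1 th0 b_nz[of 2] by simp
  ultimately have "VV 1 = 1 + h 1 + h 2" by (simp add: VV_def EE_def)
  then show ?thesis using True h_out[of "-1"] by (simp add: RR_def Vi_def VV_def)
next
  case False
  define m where "m = nat (k - 2)"
  have m: "k = int m + 2" using False assms unfolding m_def by simp
  have mK: "m + 2 \<le> K" using m assms by simp
  have e: "nat k - 1 = m + 1" "nat k = m + 2" "nat (k - 1) = m + 1" "nat (k - 2) = m" "nat (k - 3) = m - 1" "nat (k - 4) = m - 2"
    using m by auto
  have idx: "2*k - 1 = 2*int m + 3" "2*k = 2*int m + 4" "2*k - 3 = 2*int m + 1" "2*k - 2 = 2*int m + 2"
     "2*k - 5 = 2*int m - 1" using m by simp_all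
  have L: "Vi k = VV (m + 2)" unfolding Vi_def e by simp
  have R: "RR Vi k = VV (m + 1) + h (2 * int m + 3) * VV m + h (2 * int m + 4) * VV m
     + c (1 + betaf b \<beta>3 \<beta>5 (m + 1) * (b (2 * int m + 2))\<^sup>2) * (h (2 * int m + 4) * (h (2 * int m + 1) * VV (m - 1)))
     + c (betaf b \<beta>3 \<beta>5 (m + 1)) * (h (2 * int m + 4) * (h (2 * int m + 1) * (h (2 * int m + 2) * (VV m - h (2 * int m - 1) * VV (m - 2)))))"
  proof -
    have ii: "3 + 2 * int m = 2 * int m + 3" "1 + 2 * int m = 2 * int m + 1" "2 + 2 * int m = 2 * int m + 2" by simp_all
    show ?thesis unfolding RR_def Vi_def e idx(2) by (simp add: ii)
  qed
  show ?thesis unfolding L R using VV_rec2[OF mK, unfolded coefs[OF mK] c1 mult_1_left] by simp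
qed


lemma reorder3: "h (2*k - 2) * h (2*k - 3) * h (2*k) = h (2*k) * (h (2*k - 3) * h (2*k - 2))"
proof -
  have c1: "h (2*k - 3) * h (2*k) = h (2*k) * h (2*k - 3)" by (rule h_com) simp
  have a1: "h (2*k - 2) * h (2*k) = - (h (2*k) * h (2*k - 2))" by (rule h_anti) simp
  have a2: "h (2*k - 2) * h (2*k - 3) = - (h (2*k - 3) * h (2*k - 2))" by (rule h_anti) simp
  have "h (2*k - 2) * h (2*k - 3) * h (2*k) = h (2*k - 2) * (h (2*k) * h (2*k - 3))"
    by (simp add: c1 mult.assoc)
  also have "\<dots> = - (h (2*k) * (h (2*k - 2) * h (2*k - 3)))"
    by (simp add: a1 flip: mult.assoc)
  also have "\<dots> = h (2*k) * (h (2*k - 3) * h (2*k - 2))"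
    by (simp add: a2)
  finally show ?thesis .
qed

lemma hh_left: "h i * (h i * Y) = c ((b i)\<^sup>2) * Y"
  by (simp add: h_sq_all flip: mult.assoc)

lemma T_RR: assumes "1 \<le> k" "k \<le> int K" shows "Ti k = RR Ti k"
proof (cases "k = 1")
  case True
  have t: "Ti 0 = 1" "Ti (-1) = 1" "Ti (-2) = 1" "Ti (-3) = 1" by (simp_all add: Ti_def ts_le0)
  show ?thesis using True T_one h_out[of "-1"] ts_le0[of 0] ts_le0[of "-2"] unfolding RR_def by (simp add: Ti_def t[unfolded Ti_def])
next
  case False
  then have k2: "k \<ge> 2" using assms by simp
  have ti: "Ti k = ts (2*k)" "Ti (k - 1) = ts (2*k - 2)" "Ti (k - 2) = ts (2*k - 4)" "Ti (k - 3) = ts (2*k - 6)"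
     "Ti (k - 4) = ts (2*k - 8)" by (simp_all add: Ti_def right_diff_distrib)
  let ?\<beta> = "betaf b \<beta>3 \<beta>5 (nat k - 1)"
  have V1: "vv (1, k) = c ?\<beta> * (h (2*k) * (h (2*k - 3) * h (2*k - 2)))"
    using vv1[of k] reorder3[of k] by simp
  have "ts (2*k) = ts (2*k - 2) + h (2*k - 1) * ts (2*k - 4)
     + h (2*k) * (ts (2*k - 4) + h (2*k - 3) * ts (2*k - 6))
     + vv (1, k) * ((ts (2*k - 4) - h (2*k - 5) * ts (2*k - 8)) + h (2*k - 2) * ts (2*k - 6))"
    by (rule T_even[OF k2])
  also have "vv (1, k) * ((ts (2*k - 4) - h (2*k - 5) * ts (2*k - 8)) + h (2*k - 2) * ts (2*k - 6))
     = c ?\<beta> * (h (2*k) * (h (2*k - 3) * (h (2*k - 2) * (ts (2*k - 4) - h (2*k - 5) * ts (2*k - 8)))))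
       + c (?\<beta> * (b (2*k - 2))\<^sup>2) * (h (2*k) * (h (2*k - 3) * ts (2*k - 6)))"
    unfolding V1 by (simp only: distrib_left mult.assoc hh_left h_left c_cc)
  finally have E: "ts (2*k) = ts (2*k - 2) + h (2*k - 1) * ts (2*k - 4)
     + h (2*k) * (ts (2*k - 4) + h (2*k - 3) * ts (2*k - 6))
     + (c ?\<beta> * (h (2*k) * (h (2*k - 3) * (h (2*k - 2) * (ts (2*k - 4) - h (2*k - 5) * ts (2*k - 8)))))
       + c (?\<beta> * (b (2*k - 2))\<^sup>2) * (h (2*k) * (h (2*k - 3) * ts (2*k - 6))))" .
  have cc: "c (1 + ?\<beta> * (b (2*k - 2))\<^sup>2) * (h (2*k) * (h (2*k - 3) * ts (2*k - 6)))
     = h (2*k) * (h (2*k - 3) * ts (2*k - 6)) + c (?\<beta> * (b (2*k - 2))\<^sup>2) * (h (2*k) * (h (2*k - 3) * ts (2*k - 6)))"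
    by (simp add: c_add distrib_right)
  show ?thesis unfolding RR_def ti E cc by (simp add: distrib_left add_ac)
qed

lemma T_eq_V: "\<forall>j. j \<le> int n \<longrightarrow> j \<le> int K \<longrightarrow> Ti j = Vi j"
proof (induction n)
  case 0
  then show ?case by (auto simp: Ti_def Vi_def ts_le0 VV_def)
next
  case (Suc n)
  show ?case
  proof (intro allI impI)
    fix j assume j: "j \<le> int (Suc n)" "j \<le> int K"
    show "Ti j = Vi j"
    proof (cases "j \<le> int n")
      case True then show ?thesis using Suc.IH j by auto
    next
      case False
      then have jn: "j = int n + 1" using j by simp
      have "Ti j = RR Ti j" using T_RR[of j] jn j by simp
      also have "\<dots> = RR Vi j"
      proof (rule RR_cong)
        fix i assume "j - 4 \<le> i" "i \<le> j - 1"
        then show "Ti i = Vi i" using Suc.IH jn j by auto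
      qed
      also have "\<dots> = Vi j" using V_RR[of j] jn j by simp
      finally show ?thesis .
    qed
  qed
qed

end

theorem mainTheorem12:
  fixes c :: "complex \<Rightarrow> 'a::ring_1"
    and h :: "int \<Rightarrow> 'a"
    and b \<theta> :: "int \<Rightarrow> complex"
    and k :: nat
    and \<beta>3 \<beta>5 :: complex
  assumes alg: "alg_emb c"
    and k1: "1 \<le> k"
    and h_out: "\<And>j. j < 1 \<or> j > 2 * int k \<Longrightarrow> h j = 0"
    and b_out: "\<And>j. j < 1 \<or> j > 2 * int k \<Longrightarrow> b j = 0"
    and h_sq: "\<And>m. 1 \<le> m \<Longrightarrow> m \<le> 2 * int k \<Longrightarrow> h m * h m = c ((b m)\<^sup>2)"
    and h_ac1: "\<And>m. 1 \<le> m \<Longrightarrow> m + 1 \<le> 2 * int k \<Longrightarrow> h m * h (m + 1) = - (h (m + 1) * h m)"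
    and h_ac2: "\<And>m. 1 \<le> m \<Longrightarrow> m + 2 \<le> 2 * int k \<Longrightarrow> h m * h (m + 2) = - (h (m + 2) * h m)"
    and h_comm: "\<And>m l. 1 \<le> m \<Longrightarrow> m \<le> 2 * int k \<Longrightarrow> 1 \<le> l \<Longrightarrow> l \<le> 2 * int k \<Longrightarrow>
                   \<bar>l - m\<bar> > 2 \<Longrightarrow> h m * h l = h l * h m"
    and b_nz: "\<And>j. 1 \<le> j \<Longrightarrow> j \<le> 2 * int k \<Longrightarrow> b j \<noteq> 0"
    and th0: "\<theta> 0 = 0" and thm1: "\<theta> (-1) = 0"
    and cos_nz: "\<And>j. 1 \<le> j \<Longrightarrow> j \<le> 2 * int k \<Longrightarrow> cos (\<theta> j) \<noteq> 0"
    and sin_even: "\<And>j. 1 \<le> j \<Longrightarrow> j \<le> int k \<Longrightarrow>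
                     sin (\<theta> (2*j)) = b (2*j) / cos (\<theta> (2*j - 2))"
    and sin_odd: "\<And>j. 1 \<le> j \<Longrightarrow> j \<le> int k \<Longrightarrow>
                     sin (\<theta> (2*j - 1)) = b (2*j - 1) /
                       (cos (\<theta> (2*j - 2)) * cos (\<theta> (2*j - 3)) * cos (\<theta> (2*j)))"
    and beta3: "\<beta>3 = 1 / (1 - (b 2)\<^sup>2)"
    and beta5: "\<beta>5 = 1 / (1 - (b 2)\<^sup>2 - (b 4)\<^sup>2)"
    and denom_nz: "\<And>m. 3 \<le> m \<Longrightarrow> m < k \<Longrightarrow>
                     (b (2 * int m - 4))\<^sup>2 * betaf b \<beta>3 \<beta>5 (m - 2)
                     - (b (2 * int m))\<^sup>2 * betaf b \<beta>3 \<beta>5 (m - 1) + 1 \<noteq> 0"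
  shows "(\<forall>j::nat. 2 \<le> j \<and> j \<le> k \<longrightarrow>
            betaf b \<beta>3 \<beta>5 (j - 1) =
              1 / ((cos (\<theta> (2 * int j - 4)))\<^sup>2 * (cos (\<theta> (2 * int j - 2)))\<^sup>2))
         \<and> transfer c b \<beta>3 \<beta>5 h (2 * int k) (-1) = circV c b \<theta> h k"
proof -
  interpret model c h b \<theta> k \<beta>3 \<beta>5
    by (rule model.intro) (fact assms)+
  have P1: "\<forall>j::nat. 2 \<le> j \<and> j \<le> k \<longrightarrow>
            betaf b \<beta>3 \<beta>5 (j - 1) =
              1 / ((cos (\<theta> (2 * int j - 4)))\<^sup>2 * (cos (\<theta> (2 * int j - 2)))\<^sup>2)"
  proof (intro allI impI)
    fix j :: nat assume j: "2 \<le> j \<and> j \<le> k"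
    have e: "2 * int (j - 1) - 2 = 2 * int j - 4" "2 * int (j - 1) = 2 * int j - 2" using j by auto
    show "betaf b \<beta>3 \<beta>5 (j - 1) = 1 / ((cos (\<theta> (2 * int j - 4)))\<^sup>2 * (cos (\<theta> (2 * int j - 2)))\<^sup>2)"
    proof -
      have "1 \<le> j - 1" "j - 1 < k" using j by auto
      from beta_formula[OF this] have X: "betaf b \<beta>3 \<beta>5 (j - 1) = 1 / ((cs (2 * int j - 2 - 2))\<^sup>2 * (cs (2 * int j - 2))\<^sup>2)"
        unfolding e(2) .
      have "2 * int j - 2 - 2 = 2 * int j - 4" by simp
      with X show ?thesis by simp
    qed
  qed
  have "transfer c b \<beta>3 \<beta>5 h (2 * int k) (-1) = Ti (int k)"
    by (simp add: transfer_SS Ti_def)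
  also have "\<dots> = Vi (int k)" using T_eq_V[of k] by simp
  also have "\<dots> = circV c b \<theta> h k" by (simp add: Vi_def VV_def circV_Gp)
  finally show ?thesis using P1 by simp
qed

end
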